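(* Let the polynomials $L_h(z)$, $h\ge 0$, be defined by $L_0(z)=z$, $L_1(z)=z^2$ and $L_{h+2}(z)=L_{h+1}(z)\bigl(L_{h+1}(z)+L_h(z)\bigr)$ for all $h\ge 0$. For each $h$, let $\gamma_h$ be the unique positive real solution of $L_h(z)=1/2$. Let $\ell_n$ be the coefficient of $z^n$ in $L(z)=\sum_{h\ge0}L_h(z)$. Then the limit $\gamma=\lim_{h\to\infty}\gamma_h=0.67418\ldots$ exists, and \[\log_2(\ell_n)=n\log_2(\gamma^{-1})+\log\theta(n),\qquad n\log_2(\gamma^{-1})=n(0.568\ldots),\] for a function $\theta$ growing at most sub-exponentially, i.e. $\theta(n)=o(\kappa^n)$ for every $\kappa>1$.
   Context: $L_h(z)$ is the generating function of Left-Leaning AVL trees of height $h$ (AVL trees in which at every node the left subtree's height is at least the right subtree's height), and $\ell_n$ is the corresponding counting sequence of Left-Leaning AVL trees. *)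

theory Defs
  imports "HOL-Computational_Algebra.Polynomial" "HOL-Library.Landau_Symbols" Complex_Main
begin

text \<open>Generating polynomials of left-leaning AVL trees of height h (natural coefficients).\<close>
fun LL :: "nat \<Rightarrow> nat poly" where
  "LL 0 = [:0, 1:]"
| "LL (Suc 0) = [:0, 0, 1:]"
| "LL (Suc (Suc h)) = LL (Suc h) * (LL (Suc h) + LL h)"

definition gamma :: "nat \<Rightarrow> real" where
  "gamma h = (THE z. z > 0 \<and> poly (map_poly real (LL h)) z = 1 / 2)"

text \<open>ell n: coefficient of z^n in L(z) = sum over h of L_h(z); only finitely many
  L_h contribute to a given coefficient, so this is a finite-support sum.\<close>
definition ell :: "nat \<Rightarrow> nat" where
  "ell n = (\<Sum>h \<in> {h. coeff (LL h) n \<noteq> 0}. coeff (LL h) n)"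

end

theory Submission
  imports Defs
begin

lemma poly_map_real_add: "poly (map_poly real (p + q)) x = poly (map_poly real p) x + poly (map_poly real q) x"
proof (induction p arbitrary: q rule: pCons_induct)
  case 0 then show ?case by simp
next
  case (pCons a p)
  show ?case
  proof (cases q rule: pCons_cases)
    case (pCons b q')
    then show ?thesis using pCons.IH[of q'] by (simp add: map_poly_pCons algebra_simps)
  qed
qed

lemma poly_map_real_mult: "poly (map_poly real (p * q)) x = poly (map_poly real p) x * poly (map_poly real q) x"
proof (induction p rule: pCons_induct)
  case 0 then show ?case by simp
next
  case (pCons a p)
  have "poly (map_poly real (pCons a p * q)) x = poly (map_poly real (smult a q + pCons 0 (p * q))) x"
    by simp
  also have "\<dots> = real a * poly (map_poly real q) x + x * poly (map_poly real (p*q)) x"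
    by (simp only: poly_map_real_add) (simp add: map_poly_smult map_poly_pCons)
  finally show ?case using pCons.IH by (simp add: map_poly_pCons algebra_simps)
qed

lemma poly_map_real_nonneg: "(z::real) \<ge> 0 \<Longrightarrow> poly (map_poly real p) z \<ge> 0"
  by (induction p rule: pCons_induct) (auto simp: map_poly_pCons)

lemma coeff_le_poly: "(z::real) \<ge> 0 \<Longrightarrow> real (coeff p n) * z ^ n \<le> poly (map_poly real p) z"
proof (induction p arbitrary: n rule: pCons_induct)
  case 0 then show ?case by simp
next
  case (pCons a p)
  have nn: "poly (map_poly real p) z \<ge> 0" using pCons.prems poly_map_real_nonneg by blast
  show ?case
  proof (cases n)
    case 0 then show ?thesis using nn pCons.prems by (simp add: map_poly_pCons)
  next
    case (Suc m)
    have "real (coeff p m) * z ^ m \<le> poly (map_poly real p) z" using pCons by blast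
    then have "z * (real (coeff p m) * z ^ m) \<le> z * poly (map_poly real p) z"
      using pCons.prems by (simp add: mult_left_mono)
    then show ?thesis using Suc by (simp add: map_poly_pCons algebra_simps)
  qed
qed

definition Lr :: "nat \<Rightarrow> real \<Rightarrow> real" where
  "Lr h z = poly (map_poly real (LL h)) z"

lemma Lr_0: "Lr 0 z = z"
  by (simp add: Lr_def map_poly_pCons)
lemma Lr_1: "Lr (Suc 0) z = z^2"
  by (simp add: Lr_def map_poly_pCons power2_eq_square)
lemma Lr_SS: "Lr (Suc (Suc h)) z = Lr (Suc h) z * (Lr (Suc h) z + Lr h z)"
  by (simp add: Lr_def poly_map_real_mult poly_map_real_add)

lemma Lr_cont: "continuous_on A (Lr h)"
  unfolding Lr_def by (intro continuous_intros)

lemma Lr_mono_strict: "0 \<le> a \<Longrightarrow> a < b \<Longrightarrow> 0 \<le> Lr h a \<and> Lr h a < Lr h b"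
proof (induction h rule: LL.induct)
  case 1 then show ?case by (simp add: Lr_0)
next
  case 2 then show ?case by (simp add: Lr_1 power_strict_mono)
next
  case (3 h)
  then have i1: "0 \<le> Lr (Suc h) a" "Lr (Suc h) a < Lr (Suc h) b" and i0: "0 \<le> Lr h a" "Lr h a < Lr h b" by auto
  have "Lr (Suc h) a * (Lr (Suc h) a + Lr h a) < Lr (Suc h) b * (Lr (Suc h) b + Lr h b)"
    using i1 i0 by (intro mult_strict_mono) auto
  then show ?case using i1 i0 by (simp add: Lr_SS)
qed

lemma Lr_nonneg: "0 \<le> z \<Longrightarrow> 0 \<le> Lr h z"
  using Lr_mono_strict[of z "z+1" h] by auto

lemma Lr_mono: "0 \<le> a \<Longrightarrow> a \<le> b \<Longrightarrow> Lr h a \<le> Lr h b"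
  using Lr_mono_strict[of a b h] by (cases "a = b") auto

lemma Lr_at0: "Lr h 0 = 0"
  by (induction h rule: LL.induct) (auto simp: Lr_0 Lr_1 Lr_SS)

lemma Lr_pos: "0 < z \<Longrightarrow> 0 < Lr h z"
  using Lr_mono_strict[of 0 z h] by (simp add: Lr_at0)

lemma Lr_at1: "Lr h 1 \<ge> 1"
proof (induction h rule: LL.induct)
  case (3 h)
  then show ?case by (simp add: Lr_SS) (smt (verit) mult_le_cancel_left1)
qed (auto simp: Lr_0 Lr_1)

lemma Lr_scale: "1 \<le> q \<Longrightarrow> 0 \<le> z \<Longrightarrow> Lr h (q * z) \<ge> q ^ (Suc h) * Lr h z"
proof (induction h rule: LL.induct)
  case 1 then show ?case by (simp add: Lr_0)
next
  case 2 then show ?case by (simp add: Lr_1 power_mult_distrib power2_eq_square)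
next
  case (3 h)
  define Y1 where "Y1 = Lr (Suc h) (q*z)"
  define Y0 where "Y0 = Lr h (q*z)"
  define X1 where "X1 = Lr (Suc h) z"
  define X0 where "X0 = Lr h z"
  have qz: "0 \<le> q*z" using 3 by simp
  have h1: "Y1 \<ge> q^(Suc (Suc h)) * X1" "Y0 \<ge> q^(Suc h) * X0" using 3 by (auto simp: Y1_def X1_def Y0_def X0_def)
  have nn: "X1 \<ge> 0" "X0 \<ge> 0" using 3 by (auto simp: X1_def X0_def Lr_nonneg)
  have qp: "q^(Suc h) \<ge> 1" "q^(Suc (Suc h)) \<ge> q^(Suc h)" using 3 one_le_power[of q "Suc h"] power_increasing[of "Suc h" "Suc (Suc h)" q] by auto
  have a: "Y1 + Y0 \<ge> q^(Suc h) * (X1 + X0)"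
  proof -
    have "q^(Suc h) * X1 \<le> q^(Suc (Suc h)) * X1" using qp nn by (intro mult_right_mono) auto
    then show ?thesis using h1 by (simp add: algebra_simps)
  qed
  have "q^(Suc (Suc (Suc h))) * (X1 * (X1 + X0)) \<le> (q^(Suc (Suc h)) * X1) * (q^(Suc h) * (X1 + X0))"
  proof -
    have "q^(Suc (Suc (Suc h))) \<le> q^(Suc (Suc h)) * q^(Suc h)"
      using 3 by (simp add: power_add[symmetric] power_increasing)
    then have "q^(Suc (Suc (Suc h))) * (X1 * (X1 + X0)) \<le> (q^(Suc (Suc h)) * q^(Suc h)) * (X1 * (X1 + X0))"
      using nn by (intro mult_right_mono) auto
    then show ?thesis by (simp add: algebra_simps)
  qed
  also have "\<dots> \<le> Y1 * (Y1 + Y0)"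
    using h1 a nn qp by (intro mult_mono) (auto intro: order_trans[OF _ h1(1)])
  finally show ?case by (simp add: Lr_SS Y1_def Y0_def X1_def X0_def)
qed

lemma root_ex1: "\<exists>!z::real. z > 0 \<and> Lr h z = 1 / 2"
proof -
  obtain z where z: "0 \<le> z" "z \<le> 1" "Lr h z = 1/2"
    using IVT'[of "Lr h" 0 "1/2" 1] Lr_at0 Lr_at1[of h] Lr_cont by force
  have "z > 0" using z Lr_at0[of h] by (cases "z = 0") auto
  moreover have "w = z" if "w > 0" "Lr h w = 1/2" for w
    using Lr_mono_strict[of w z h] Lr_mono_strict[of z w h] z that by (cases w z rule: linorder_cases) auto
  ultimately show ?thesis using z by blast
qed

lemma gamma_eq: "gamma h > 0 \<and> Lr h (gamma h) = 1/2"
proof -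
  have "gamma h = (THE z. z > 0 \<and> Lr h z = 1 / 2)" by (simp add: gamma_def Lr_def)
  then show ?thesis using theI'[OF root_ex1[of h]] by simp
qed

lemma gamma_gt: "0 < z \<Longrightarrow> Lr h z < 1/2 \<Longrightarrow> z < gamma h"
  using gamma_eq[of h] Lr_mono[of "gamma h" z h] by force

lemma gamma_lt: "0 < z \<Longrightarrow> Lr h z > 1/2 \<Longrightarrow> gamma h < z"
  using gamma_eq[of h] Lr_mono[of z "gamma h" h] by force


definition recseq :: "(nat \<Rightarrow> real) \<Rightarrow> bool" where
  "recseq x \<longleftrightarrow> (\<forall>k. x k \<ge> 0 \<and> x (Suc (Suc k)) = x (Suc k) * (x (Suc k) + x k))"

lemma recseq_Lr: "0 \<le> z \<Longrightarrow> recseq (\<lambda>h. Lr h z)"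
  by (simp add: recseq_def Lr_SS Lr_nonneg)

lemma A_seq:
  assumes x: "recseq x" and h: "x h \<le> 1/2" "x (Suc h) \<le> 1/2" "x h + x (Suc h) < 1"
  shows "\<exists>h' r. 0 \<le> r \<and> r < 1 \<and> (\<forall>k\<ge>h'. x (Suc k) \<le> r * x k \<and> x (Suc k) < 1/2)"
proof -
  have rec: "\<And>k. x (Suc (Suc k)) = x (Suc k) * (x (Suc k) + x k)" and nn: "\<And>k. x k \<ge> 0"
    using x by (auto simp: recseq_def)
  define r where "r = x (Suc h) + x (Suc (Suc h))"
  have x2: "x (Suc (Suc h)) \<le> x (Suc h)"
  proof -
    have "x (Suc h) * (x (Suc h) + x h) \<le> x (Suc h) * 1"
      using h nn[of "Suc h"] by (intro mult_left_mono) auto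
    then show ?thesis using rec[of h] by simp
  qed
  have r0: "0 \<le> r" using nn by (simp add: r_def)
  have r1: "r < 1"
  proof -
    have "x (Suc (Suc h)) \<le> x (Suc h) * 1" using x2 by simp
    have "x (Suc h) * (x (Suc h) + x h) \<le> (1/2) * (x (Suc h) + x h)"
      using h nn by (intro mult_right_mono) auto
    then show ?thesis using h rec[of h] by (simp add: r_def)
  qed
  have inv: "x (Suc (Suc h + k)) \<le> x (Suc h + k) \<and> x (Suc h + k) \<le> 1/2 \<and> x (Suc h + k) + x (Suc (Suc h + k)) \<le> r" for k
  proof (induction k)
    case 0 then show ?case using x2 h by (simp add: r_def)
  next
    case (Suc k)
    let ?a = "x (Suc h + k)" and ?b = "x (Suc (Suc h + k))" and ?c = "x (Suc (Suc (Suc h + k)))"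
    have c: "?c = ?b * (?b + ?a)" using rec[of "Suc h + k"] by simp
    have "?c \<le> ?b * r" unfolding c using Suc nn by (intro mult_left_mono) (auto simp: add.commute)
    also have "\<dots> \<le> ?b" using r1 nn by (simp add: mult_left_le)
    finally show ?case using Suc by simp
  qed
  have "\<forall>k\<ge>Suc (Suc h). x (Suc k) \<le> r * x k \<and> x (Suc k) < 1/2"
  proof (intro allI impI)
    fix k assume "k \<ge> Suc (Suc h)"
    then obtain j where k: "k = Suc (Suc h + j)" using le_iff_add[of "Suc (Suc h)" k] by auto
    have c: "x (Suc k) = x k * (x k + x (Suc h + j))" using rec[of "Suc h + j"] k by simp
    have "x (Suc k) \<le> x k * r" unfolding c using inv[of j] nn k by (intro mult_left_mono) (auto simp: add.commute)
    moreover have "x k * r < 1/2"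
    proof -
      have "x k * r \<le> (1/2) * r" using inv[of "Suc j"] k r0 by (intro mult_right_mono) auto
      also have "\<dots> < 1/2" using r1 by simp
      finally show ?thesis .
    qed
    ultimately show "x (Suc k) \<le> r * x k \<and> x (Suc k) < 1/2" by (simp add: mult.commute)
  qed
  then show ?thesis using r0 r1 by blast
qed

lemma B_seq:
  assumes x: "recseq x" and h: "x h \<ge> 1/2" "x (Suc h) \<ge> 1/2" "x h + x (Suc h) > 1"
  shows "\<exists>h'. \<forall>k\<ge>h'. x k > 1/2"
proof -
  have rec: "\<And>k. x (Suc (Suc k)) = x (Suc k) * (x (Suc k) + x k)" and nn: "\<And>k. x k \<ge> 0"
    using x by (auto simp: recseq_def)
  define r where "r = x (Suc h) + x (Suc (Suc h))"
  have x2: "x (Suc (Suc h)) > x (Suc h)"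
  proof -
    have "x (Suc h) * 1 < x (Suc h) * (x (Suc h) + x h)"
      using h by (intro mult_strict_left_mono) auto
    then show ?thesis using rec[of h] by simp
  qed
  have r1: "r > 1" using x2 h by (simp add: r_def)
  have inv: "x (Suc (Suc h + k)) \<ge> x (Suc h + k) \<and> x (Suc h + k) \<ge> 1/2 \<and> x (Suc h + k) + x (Suc (Suc h + k)) \<ge> r" for k
  proof (induction k)
    case 0 then show ?case using x2 h by (simp add: r_def)
  next
    case (Suc k)
    let ?a = "x (Suc h + k)" and ?b = "x (Suc (Suc h + k))" and ?c = "x (Suc (Suc (Suc h + k)))"
    have c: "?c = ?b * (?b + ?a)" using rec[of "Suc h + k"] by simp
    have "?b * r \<le> ?c" unfolding c using Suc nn by (intro mult_left_mono) (auto simp: add.commute)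
    moreover have "?b \<le> ?b * r" using r1 nn[of "Suc (Suc h + k)"] by (simp add: mult_le_cancel_left1)
    ultimately have "?b \<le> ?c" by linarith
    then show ?case using Suc.IH by auto
  qed
  have "\<forall>k\<ge>Suc (Suc h). x k > 1/2"
  proof (intro allI impI)
    fix k assume "k \<ge> Suc (Suc h)"
    then obtain j where k: "k = Suc (Suc h + j)" using le_iff_add[of "Suc (Suc h)" k] by auto
    show "x k > 1/2" using inv[of j] k r1 by auto
  qed
  then show ?thesis by blast
qed

definition Aset :: "real \<Rightarrow> bool" where
  "Aset z \<longleftrightarrow> (\<exists>h. Lr h z \<le> 1/2 \<and> Lr (Suc h) z \<le> 1/2 \<and> Lr h z + Lr (Suc h) z < 1)"
definition Bset :: "real \<Rightarrow> bool" where
  "Bset z \<longleftrightarrow> (\<exists>h. Lr h z \<ge> 1/2 \<and> Lr (Suc h) z \<ge> 1/2 \<and> Lr h z + Lr (Suc h) z > 1)"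

lemma A_down: "Aset z \<Longrightarrow> 0 \<le> w \<Longrightarrow> w \<le> z \<Longrightarrow> Aset w"
proof -
  assume a: "Aset z" "0 \<le> w" "w \<le> z"
  then obtain h where h: "Lr h z \<le> 1/2" "Lr (Suc h) z \<le> 1/2" "Lr h z + Lr (Suc h) z < 1"
    unfolding Aset_def by blast
  have "Lr h w \<le> Lr h z" "Lr (Suc h) w \<le> Lr (Suc h) z" using a Lr_mono by auto
  then show "Aset w" unfolding Aset_def using h by (intro exI[of _ h]) auto
qed

lemma B_up: "Bset z \<Longrightarrow> 0 \<le> z \<Longrightarrow> z \<le> w \<Longrightarrow> Bset w"
proof -
  assume a: "Bset z" "0 \<le> z" "z \<le> w"
  then obtain h where h: "Lr h z \<ge> 1/2" "Lr (Suc h) z \<ge> 1/2" "Lr h z + Lr (Suc h) z > 1"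
    unfolding Bset_def by blast
  have "Lr h w \<ge> Lr h z" "Lr (Suc h) w \<ge> Lr (Suc h) z" using a Lr_mono by auto
  then show "Bset w" unfolding Bset_def using h by (intro exI[of _ h]) auto
qed

lemma A_eventually: "Aset z \<Longrightarrow> 0 \<le> z \<Longrightarrow> \<exists>h' r. 0 \<le> r \<and> r < 1 \<and> (\<forall>k\<ge>h'. Lr (Suc k) z \<le> r * Lr k z \<and> Lr (Suc k) z < 1/2)"
  unfolding Aset_def using A_seq[OF recseq_Lr] by blast

lemma B_eventually: "Bset z \<Longrightarrow> 0 \<le> z \<Longrightarrow> \<exists>h'. \<forall>k\<ge>h'. Lr k z > 1/2"
  unfolding Bset_def using B_seq[OF recseq_Lr] by blast

lemma A_not_B: "Aset z \<Longrightarrow> 0 \<le> z \<Longrightarrow> \<not> Bset z"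
proof
  assume a: "Aset z" "0 \<le> z" and b: "Bset z"
  obtain h1 r where 1: "\<forall>k\<ge>h1. Lr (Suc k) z < 1/2" using A_eventually[OF a] by blast
  obtain h2 where 2: "\<forall>k\<ge>h2. Lr k z > 1/2" using B_eventually[OF b a(2)] by blast
  show False using 1[rule_format, of "h1 + h2"] 2[rule_format, of "Suc (h1 + h2)"] by simp
qed

lemma case3_bounds:
  assumes "\<not> Aset z" "\<not> Bset z" "0 < z"
  shows "Lr h z < 1" "Lr h z \<ge> 1/2 \<or> Lr (Suc h) z \<ge> 1/2"
proof -
  show "Lr h z \<ge> 1/2 \<or> Lr (Suc h) z \<ge> 1/2"
  proof (rule ccontr)
    assume "\<not> (Lr h z \<ge> 1/2 \<or> Lr (Suc h) z \<ge> 1/2)"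
    then have "Aset z" unfolding Aset_def by (intro exI[of _ h]) auto
    then show False using assms by blast
  qed
  show "Lr h z < 1"
  proof (cases h)
    case 0
    show ?thesis
    proof (rule ccontr)
      assume "\<not> Lr h z < 1"
      then have "z \<ge> 1" using 0 by (simp add: Lr_0)
      then have "z^2 \<ge> 1" by (simp add: one_le_power)
      then have l1: "Lr (Suc 0) z \<ge> 1" unfolding Lr_1 .
      have l0: "Lr 0 z \<ge> 1" unfolding Lr_0 by fact
      have "Bset z" unfolding Bset_def using l0 l1 by (intro exI[of _ 0]) auto
      then show False using assms by blast
    qed
  next
    case (Suc k)
    show ?thesis
    proof (rule ccontr)
      assume "\<not> Lr h z < 1"
      then have g: "Lr (Suc k) z \<ge> 1" using Suc by simp
      show False
      proof (cases "Lr k z \<ge> 1/2")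
        case True
        then have "Bset z" unfolding Bset_def using g by (intro exI[of _ k]) auto
        then show False using assms by blast
      next
        case False
        have nn: "Lr k z \<ge> 0" using assms Lr_nonneg by simp
        have "Lr (Suc (Suc k)) z \<ge> 1 * 1"
          unfolding Lr_SS using g nn by (intro mult_mono) auto
        then have "Bset z" unfolding Bset_def using g by (intro exI[of _ "Suc k"]) auto
        then show False using assms by blast
      qed
    qed
  qed
qed

lemma case3_unique:
  assumes "\<not> Aset z" "\<not> Bset z" "0 < z" "\<not> Aset z'" "\<not> Bset z'" "z < z'"
  shows False
proof -
  define q where "q = z' / z"
  have q1: "q > 1" using assms by (simp add: q_def)
  have z': "z' = q * z" using assms by (simp add: q_def)
  obtain N where N: "2 < q ^ N" using real_arch_pow[OF q1] by blast
  obtain k where k: "k \<ge> N" "Lr k z \<ge> 1/2"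
    using case3_bounds(2)[OF assms(1-3), of N] by (meson le_Suc_eq order_refl)
  have "q ^ N \<le> q ^ (Suc k)" using q1 k by (intro power_increasing) auto
  then have "q ^ N * (1/2) \<le> q ^ (Suc k) * Lr k z"
    using k q1 by (intro mult_mono) auto
  also have "\<dots> \<le> Lr k z'" unfolding z' using Lr_scale[of q z k] q1 assms by simp
  also have "\<dots> < 1" using case3_bounds(1)[OF assms(4,5)] assms by simp
  finally show False using N by simp
qed

lemma Lr_1': "Lr 1 z = z^2" using Lr_1 by simp

lemma up_step:
  assumes "0 \<le> z" "Lr k z \<le> a" "Lr kp z \<le> b" "b * (b + a) \<le> c" "kp = Suc k" "kq = Suc (Suc k)"
  shows "Lr kq z \<le> c"
proof -
  have b0: "0 \<le> b" using Lr_nonneg[of z "Suc k"] assms by simp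
  have "Lr kq z = Lr (Suc k) z * (Lr (Suc k) z + Lr k z)" using Lr_SS[of k z] assms by simp
  also have "\<dots> \<le> b * (b + a)"
    using assms Lr_nonneg[of z] b0 by (intro mult_mono add_mono) auto
  finally show ?thesis using assms by simp
qed

lemma lo_step:
  assumes "0 \<le> z" "a \<le> Lr k z" "b \<le> Lr kp z" "c \<le> b * (b + a)" "0 \<le> a" "0 \<le> b" "kp = Suc k" "kq = Suc (Suc k)"
  shows "c \<le> Lr kq z"
proof -
  have "b * (b + a) \<le> Lr (Suc k) z * (Lr (Suc k) z + Lr k z)"
    using assms by (intro mult_mono add_mono) auto
  also have "\<dots> = Lr kq z" using Lr_SS[of k z] assms by simp
  finally show ?thesis using assms by simp
qed

lemma num_A: "Aset 0.67418"
proof -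
  have f0: "Lr 0 0.67418 \<le> 0.67418" by (simp add: Lr_0)
  have f1: "Lr 1 0.67418 \<le> 0.454518673" by (simp add: Lr_1 Lr_1' power2_eq_square)
  have f2: "Lr 2 0.67418 \<le> 0.513014624" by (rule up_step[where k=0 and kp=1, OF _ f0 f1]) simp_all
  have f3: "Lr 3 0.67418 \<le> 0.496358731" by (rule up_step[where k=1 and kp=2, OF _ f1 f2]) simp_all
  have f4: "Lr 4 0.67418 \<le> 0.501011278" by (rule up_step[where k=2 and kp=3, OF _ f2 f3]) simp_all
  have f5: "Lr 5 0.67418 \<le> 0.499693623" by (rule up_step[where k=3 and kp=4, OF _ f3 f4]) simp_all
  have f6: "Lr 6 0.67418 \<le> 0.500045858" by (rule up_step[where k=4 and kp=5, OF _ f4 f5]) simp_all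
  have f7: "Lr 7 0.67418 \<le> 0.499915587" by (rule up_step[where k=5 and kp=6, OF _ f5 f6]) simp_all
  have f8: "Lr 8 0.67418 \<le> 0.499896313" by (rule up_step[where k=6 and kp=7, OF _ f6 f7]) simp_all
  have f9: "Lr 9 0.67418 \<le> 0.499802283" by (rule up_step[where k=7 and kp=8, OF _ f7 f8]) simp_all
  show ?thesis unfolding Aset_def using f7 f8 by (intro exI[of _ 7]) simp
qed

lemma num_B: "Bset 0.674185"
proof -
  have f0: "Lr 0 0.674185 \<ge> 0.674185" by (simp add: Lr_0)
  have f1: "Lr 1 0.674185 \<ge> 0.454525414" by (simp add: Lr_1 Lr_1' power2_eq_square)
  have f2: "Lr 2 0.674185 \<ge> 0.513027568" by (rule lo_step[where k=0 and kp=1, OF _ f0 f1]) simp_all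
  have f3: "Lr 3 0.674185 \<ge> 0.496381353" by (rule lo_step[where k=1 and kp=2, OF _ f1 f2]) simp_all
  have f4: "Lr 4 0.674185 \<ge> 0.501051765" by (rule lo_step[where k=2 and kp=3, OF _ f2 f3]) simp_all
  have f5: "Lr 5 0.674185 \<ge> 0.499765624" by (rule lo_step[where k=3 and kp=4, OF _ f3 f4]) simp_all
  have f6: "Lr 6 0.674185 \<ge> 0.500174126" by (rule lo_step[where k=4 and kp=5, OF _ f4 f5]) simp_all
  have f7: "Lr 7 0.674185 \<ge> 0.500143990" by (rule lo_step[where k=5 and kp=6, OF _ f5 f6]) simp_all
  have f8: "Lr 8 0.674185 \<ge> 0.500303093" by (rule lo_step[where k=6 and kp=7, OF _ f6 f7]) simp_all
  show ?thesis unfolding Bset_def using f6 f7 by (intro exI[of _ 6]) simp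
qed

definition gam :: real where "gam = Sup {z. 0 < z \<and> Aset z}"

lemma A_half: "Aset (1/2)"
  unfolding Aset_def by (intro exI[of _ 0]) (simp add: Lr_0 Lr_1 power2_eq_square)

lemma B_one: "Bset 1"
  unfolding Bset_def by (intro exI[of _ 0]) (simp add: Lr_0 Lr_1)

lemma not_A_ge1: "1 \<le> z \<Longrightarrow> \<not> Aset z"
  using B_up[OF B_one, of z] A_not_B[of z] by auto

lemma S_bdd: "bdd_above {z. 0 < z \<and> Aset z}"
proof (rule bdd_aboveI[of _ 1])
  fix x assume "x \<in> {z. 0 < z \<and> Aset z}"
  then show "x \<le> 1" using not_A_ge1[of x] by (cases "x \<le> 1") auto
qed

lemma S_ne: "{z. 0 < z \<and> Aset z} \<noteq> {}"
  using A_half by force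

lemma gam_ge: "0 < z \<Longrightarrow> Aset z \<Longrightarrow> z \<le> gam"
  unfolding gam_def by (rule cSup_upper[OF _ S_bdd]) auto

lemma gam_pos: "gam \<ge> 1/2"
  using gam_ge[OF _ A_half] by simp

lemma below_gam: "0 < z \<Longrightarrow> z < gam \<Longrightarrow> Aset z"
proof -
  assume z: "0 < z" "z < gam"
  then obtain w where "w \<in> {z. 0 < z \<and> Aset z}" "z < w"
    using less_cSup_iff[OF S_ne S_bdd, of z] unfolding gam_def by blast
  then show "Aset z" using A_down[of w z] z by auto
qed

lemma above_gam: "gam < z \<Longrightarrow> Bset z"
proof -
  assume z: "gam < z"
  define z1 where "z1 = gam + (z - gam) / 3"
  define z2 where "z2 = gam + 2 * (z - gam) / 3"
  have z12a: "gam < z1" using z unfolding z1_def by (simp add: field_simps)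
  have z12b: "z1 < z2" using z unfolding z1_def z2_def by (simp add: field_simps)
  have z12c: "z2 < z" using z unfolding z2_def by (simp add: field_simps)
  have z12d: "0 < z1" using z12a gam_pos by linarith
  note z12 = z12a z12b z12c z12d
  have "gam < z2" using z12 by linarith
  then have nA: "\<not> Aset z1" "\<not> Aset z2" using gam_ge[of z1] gam_ge[of z2] z12 by force+
  have "Bset z1 \<or> Bset z2" using case3_unique[of z1 z2] nA z12 by auto
  then show "Bset z"
    using B_up[of z1 z] B_up[of z2 z] z12 by auto
qed

lemma gam_le: "0 < z \<Longrightarrow> Bset z \<Longrightarrow> gam \<le> z"
  using below_gam A_not_B by force

lemma gam_bounds: "0.67418 \<le> gam" "gam \<le> 0.674185"
  using gam_ge[OF _ num_A] gam_le[OF _ num_B] by auto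

lemma gamma_tendsto: "gamma \<longlonglongrightarrow> gam"
proof (rule LIMSEQ_I)
  fix e :: real assume e: "0 < e"
  define z1 where "z1 = gam - min e gam / 2"
  define z2 where "z2 = gam + e / 2"
  have z1: "0 < z1" "z1 < gam" using gam_pos e by (auto simp: z1_def min_def)
  have z2: "gam < z2" using e by (simp add: z2_def)
  obtain h1 r where h1: "\<forall>k\<ge>h1. Lr (Suc k) z1 < 1/2"
    using A_eventually[OF below_gam[OF z1]] z1 by auto
  obtain h2 where h2: "\<forall>k\<ge>h2. Lr k z2 > 1/2"
    using B_eventually[OF above_gam[OF z2]] z2 gam_pos by auto
  have "norm (gamma n - gam) < e" if n: "n \<ge> Suc (h1 + h2)" for n
  proof -
    obtain k where k: "n = Suc k" "k \<ge> h1" using n by (cases n) auto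
    have "z1 < gamma n" using gamma_gt[OF z1(1)] h1 k by auto
    moreover have "gamma n < z2" using gamma_lt[of z2 n] h2 n z2 gam_pos by auto
    moreover have "z1 \<ge> gam - e / 2" using e unfolding z1_def by (simp add: min_def)
    ultimately have "gam - e < gamma n" "gamma n < gam + e" using e unfolding z2_def by linarith+
    then show ?thesis by (simp add: abs_less_iff)
  qed
  then show "\<exists>no. \<forall>n\<ge>no. norm (gamma n - gam) < e" by blast
qed

lemma Lr_summable: "0 < z \<Longrightarrow> z < gam \<Longrightarrow> summable (\<lambda>h. Lr h z)"
proof -
  assume z: "0 < z" "z < gam"
  obtain h' r where hr: "0 \<le> r" "r < 1" "\<forall>k\<ge>h'. Lr (Suc k) z \<le> r * Lr k z \<and> Lr (Suc k) z < 1/2"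
    using A_eventually[OF below_gam[OF z]] z by auto
  have b: "Lr (k + h') z \<le> Lr h' z * r ^ k" for k
  proof (induction k)
    case 0 then show ?case by simp
  next
    case (Suc k)
    have "Lr (Suc k + h') z \<le> r * Lr (k + h') z" using hr(3) by auto
    also have "\<dots> \<le> r * (Lr h' z * r ^ k)" using Suc hr by (intro mult_left_mono) auto
    finally show ?case by (simp add: algebra_simps)
  qed
  have "summable (\<lambda>k. Lr h' z * r ^ k)" using hr by (intro summable_mult summable_geometric) auto
  then have "summable (\<lambda>k. Lr (k + h') z)"
    by (rule summable_comparison_test') (use b Lr_nonneg z in auto)
  then show ?thesis by (subst summable_iff_shift[symmetric, of _ h']) 
qed

fun mm :: "nat \<Rightarrow> nat" where
  "mm 0 = 1"
| "mm (Suc 0) = 2"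
| "mm (Suc (Suc h)) = mm (Suc h) + mm h"

lemma mm_ge: "mm h \<ge> h + 1"
  by (induction h rule: mm.induct) auto

lemma mm_mono: "mm h \<le> mm (Suc h)"
  by (cases h) auto

lemma mm_pow2: "mm (Suc h) \<le> 2^h + 1 \<and> mm (Suc (Suc h)) \<le> 2^(Suc h) + 1"
proof (induction h)
  case 0 then show ?case by simp
next
  case (Suc h)
  have p: "(1::nat) \<le> 2^h" by simp
  have e1: "mm (Suc (Suc (Suc h))) = mm (Suc (Suc h)) + mm (Suc h)" by simp
  have e2: "(2::nat)^(Suc (Suc h)) = 4 * 2^h" "(2::nat)^(Suc h) = 2 * 2^h" by simp_all
  show ?case unfolding e1 e2 using Suc p unfolding e2 by linarith
qed

lemma mm_pow: "mm (Suc h) \<le> 2^h + 1"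
  using mm_pow2 by blast

lemma mm_le_pow: "mm h \<le> 2^h"
proof (cases h)
  case 0 then show ?thesis by simp
next
  case (Suc k)
  have p: "(1::nat) \<le> 2^k" "mm (Suc k) \<le> 2^k + 1" using mm_pow[of k] by simp_all
  then have "mm (Suc k) \<le> 2 * 2^k" by linarith
  then show ?thesis using Suc by simp
qed

definition low :: "nat poly \<Rightarrow> nat \<Rightarrow> bool" where
  "low p a \<longleftrightarrow> (\<forall>n<a. coeff p n = 0)"

lemma low_mult: "low p a \<Longrightarrow> low q c \<Longrightarrow> low (p * q) (a + c)"
  unfolding low_def coeff_mult
proof (intro allI impI sum.neutral ballI)
  fix n i assume p: "\<forall>n<a. coeff p n = 0" and q: "\<forall>n<c. coeff q n = 0" and n: "n < a + c" and i0: "i \<in> {..n}"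
  have i: "i \<le> n" using i0 by simp
  show "coeff p i * coeff q (n - i) = 0"
  proof (cases "i < a")
    case True then show ?thesis using p by simp
  next
    case False then have "n - i < c" using n i by presburger
    then show ?thesis using q by simp
  qed
qed

lemma low_add: "low p a \<Longrightarrow> low q c \<Longrightarrow> low (p + q) (min a c)"
  unfolding low_def by simp

lemma low_LL: "low (LL h) (mm h)"
proof (induction h rule: LL.induct)
  case 1 then show ?case by (auto simp: low_def)
next
  case 2
  show ?case unfolding low_def
  proof (intro allI impI)
    fix n :: nat assume "n < mm (Suc 0)"
    then have "n = 0 \<or> n = 1" by auto
    then show "coeff (LL (Suc 0)) n = 0" by auto
  qed
next
  case (3 h)
  have i1: "low (LL (Suc h)) (mm (Suc h))" "low (LL h) (mm h)" using 3 by auto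
  have "low (LL (Suc h) + LL h) (min (mm (Suc h)) (mm h))" by (rule low_add[OF i1])
  then have "low (LL (Suc h) + LL h) (mm h)" using min_absorb2[OF mm_mono[of h]] by simp
  then have "low (LL (Suc h) * (LL (Suc h) + LL h)) (mm (Suc h) + mm h)" by (rule low_mult[OF i1(1)])
  then show ?case by simp
qed

definition pos :: "nat poly \<Rightarrow> nat \<Rightarrow> nat \<Rightarrow> bool" where
  "pos p a b \<longleftrightarrow> (\<forall>n. a \<le> n \<and> n \<le> b \<longrightarrow> coeff p n > 0)"

lemma pos_mult:
  assumes "pos p a b" "pos q c d" "a \<le> b" "c \<le> d"
  shows "pos (p * q) (a + c) (b + d)"
  unfolding pos_def
proof (intro allI impI)
  fix n assume n: "a + c \<le> n \<and> n \<le> b + d"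
  define i where "i = max a (n - d)"
  have i: "a \<le> i \<and> i \<le> b \<and> c \<le> n - i \<and> n - i \<le> d \<and> i \<le> n"
  proof (cases "a \<le> n - d")
    case True then have "i = n - d" by (simp add: i_def)
    then show ?thesis using True n assms(3,4) by arith
  next
    case False then have "i = a" by (simp add: i_def)
    then show ?thesis using False n assms(3,4) by arith
  qed
  have "0 < coeff p i * coeff q (n - i)" using assms(1,2) i unfolding pos_def by auto
  also have "\<dots> \<le> (\<Sum>j\<le>n. coeff p j * coeff q (n - j))"
    by (rule member_le_sum) (use i in auto)
  finally show "0 < coeff (p * q) n" by (simp add: coeff_mult)
qed

lemma pos_add:
  assumes "pos p a b" "pos q c d" "c \<le> b + 1"
  shows "pos (p + q) a (max b d)"
  unfolding pos_def
proof (intro allI impI)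
  fix n assume n: "a \<le> n \<and> n \<le> max b d"
  show "0 < coeff (p + q) n"
  proof (cases "n \<le> b")
    case True then have "0 < coeff p n" using assms(1) n unfolding pos_def by auto
    then show ?thesis by simp
  next
    case False then have "0 < coeff q n" using assms(2,3) n unfolding pos_def by auto
    then show ?thesis by simp
  qed
qed

lemma pos_LL: "pos (LL h) (mm h) (2^h)"
proof (induction h rule: LL.induct)
  case 1 then show ?case by (auto simp: pos_def)
next
  case 2
  show ?case unfolding pos_def
  proof (intro allI impI)
    fix n :: nat assume "mm (Suc 0) \<le> n \<and> n \<le> 2 ^ Suc 0"
    then have "n = 2" by auto
    then show "0 < coeff (LL (Suc 0)) n" by (simp add: numeral_2_eq_2)
  qed
next
  case (3 h)
  have i1: "pos (LL (Suc h)) (mm (Suc h)) (2^Suc h)" "pos (LL h) (mm h) (2^h)" using 3 by auto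
  have "pos (LL h + LL (Suc h)) (mm h) (max (2^h) (2^(Suc h)))"
    by (rule pos_add[OF i1(2) i1(1)]) (use mm_pow[of h] in simp)
  moreover have "max ((2::nat)^h) (2^(Suc h)) = 2^(Suc h)" by simp
  ultimately have s: "pos (LL (Suc h) + LL h) (mm h) (2^(Suc h))" by (simp add: add.commute)
  have "pos (LL (Suc h) * (LL (Suc h) + LL h)) (mm (Suc h) + mm h) (2^(Suc h) + 2^(Suc h))"
  proof (rule pos_mult[OF i1(1) s])
    show "mm (Suc h) \<le> 2 ^ Suc h" by (rule mm_le_pow)
    have "(2::nat)^h \<le> 2^Suc h" by simp
    then show "mm h \<le> 2 ^ Suc h" using mm_le_pow[of h] by linarith
  qed
  then show ?case by simp
qed

lemma cover: "1 \<le> n \<Longrightarrow> \<exists>h. mm h \<le> n \<and> n \<le> 2^h"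
proof (induction n)
  case 0 then show ?case by simp
next
  case (Suc n)
  show ?case
  proof (cases "n = 0")
    case True then show ?thesis by (intro exI[of _ 0]) simp
  next
    case False
    then obtain h where h: "mm h \<le> n" "n \<le> 2^h" using Suc by auto
    show ?thesis
    proof (cases "Suc n \<le> 2^h")
      case True then show ?thesis using h by (intro exI[of _ h]) simp
    next
      case False
      then have "n = 2^h" using h by simp
      then show ?thesis using mm_pow[of h] by (intro exI[of _ "Suc h"]) simp
    qed
  qed
qed

lemma supp_sub: "{h. coeff (LL h) n \<noteq> 0} \<subseteq> {..<n}"
proof (rule subsetI)
  fix h assume "h \<in> {h. coeff (LL h) n \<noteq> 0}"
  then have c: "coeff (LL h) n \<noteq> 0" by (rule CollectD)
  have "h < n"
  proof (rule ccontr)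
    assume "\<not> h < n"
    then have "n < mm h" using mm_ge[of h] by linarith
    then have "coeff (LL h) n = 0" using low_LL[of h] unfolding low_def by blast
    then show False using c by contradiction
  qed
  then show "h \<in> {..<n}" by (rule lessThan_iff[THEN iffD2])
qed

lemma supp_finite: "finite {h. coeff (LL h) n \<noteq> 0}"
  by (rule finite_subset[OF supp_sub]) simp

lemma ell_pos: "1 \<le> n \<Longrightarrow> ell n > 0"
proof -
  assume n: "1 \<le> n"
  obtain h where h: "mm h \<le> n" "n \<le> 2^h" using cover[OF n] by blast
  have c: "coeff (LL h) n > 0" using pos_LL[of h] h unfolding pos_def by blast
  have c': "h \<in> {h. coeff (LL h) n \<noteq> 0}" using c by simp
  have "coeff (LL h) n \<le> ell n"
    unfolding ell_def by (rule member_le_sum[OF c' _ supp_finite]) simp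
  then show ?thesis using c by simp
qed

lemma ell_bound:
  assumes z: "0 < z" "z < gam"
  shows "real (ell n) * z ^ n \<le> suminf (\<lambda>h. Lr h z)"
proof -
  let ?S = "{h. coeff (LL h) n \<noteq> 0}"
  have "real (ell n) * z ^ n = (\<Sum>h\<in>?S. real (coeff (LL h) n) * z ^ n)"
    unfolding ell_def of_nat_sum by (rule sum_distrib_right)
  also have "\<dots> \<le> (\<Sum>h\<in>?S. Lr h z)"
  proof (rule sum_mono)
    fix h show "real (coeff (LL h) n) * z ^ n \<le> Lr h z"
      unfolding Lr_def by (rule coeff_le_poly) (use z in simp)
  qed
  also have "\<dots> \<le> suminf (\<lambda>h. Lr h z)"
    by (rule sum_le_suminf[OF Lr_summable[OF z] supp_finite]) (use z Lr_nonneg in auto)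
  finally show ?thesis .
qed

lemma num_pow1: "(0.674185::real) ^ 44 * 2^25 \<le> 1" by (simp add: power_divide)
lemma num_pow2: "1 < (0.67418::real) ^ 58 * 2^33" by (simp add: power_divide)

lemma aux_le: "x \<le> y \<Longrightarrow> y * c \<le> 1 \<Longrightarrow> 0 \<le> c \<Longrightarrow> x * c \<le> (1::real)"
  by (meson mult_right_mono order_trans)

lemma aux_less: "y \<le> x \<Longrightarrow> 1 < y * c \<Longrightarrow> 0 \<le> c \<Longrightarrow> 1 < x * (c::real)"
  by (meson mult_right_mono order_less_le_trans)

lemma two_powr: "(2 powr (a / real n)) ^ n = (2::real) ^ m" if "a = real m" "n > 0"
proof -
  have "(2 powr (a / real n)) ^ n = 2 powr (real n * (a / real n))" by (rule powr_power) simp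
  also have "\<dots> = 2 powr (real m)" using that by simp
  also have "\<dots> = 2 ^ m" by (rule powr_realpow) simp
  finally show ?thesis .
qed

lemma log_lower: "0.568 \<le> log 2 (1 / gam)"
proof -
  have g: "0 < gam" "gam \<le> 0.674185" using gam_pos gam_bounds by auto
  have "gam ^ 44 \<le> 0.674185 ^ 44" using g by (intro power_mono) auto
  then have "gam ^ 44 * 2^25 \<le> 1" by (rule aux_le[OF _ num_pow1]) simp
  moreover have gp: "0 < gam ^ 44" using g by simp
  ultimately have "2^25 \<le> 1 / gam ^ 44" by (simp add: le_divide_eq mult.commute)
  then have "2^25 \<le> (1 / gam) ^ 44" by (simp add: power_one_over)
  moreover have "(2 powr (25 / real 44)) ^ 44 = (2::real) ^ 25" by (rule two_powr) simp_all
  ultimately have "(2 powr (25 / real 44)) ^ 44 \<le> (1 / gam) ^ 44" by simp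
  then have "2 powr (25 / real 44) \<le> 1 / gam" using g by (subst (asm) power_mono_iff) auto
  then have "25 / real 44 \<le> log 2 (1 / gam)" using g by (subst le_log_iff) auto
  then show ?thesis by simp
qed

lemma log_upper: "log 2 (1 / gam) < 0.569"
proof -
  have g: "0 < gam" "0.67418 \<le> gam" using gam_pos gam_bounds by auto
  have "(0.67418::real) ^ 58 \<le> gam ^ 58" using g by (intro power_mono) auto
  then have "1 < gam ^ 58 * 2^33" by (rule aux_less[OF _ num_pow2]) simp
  moreover have gp: "0 < gam ^ 58" using g by simp
  ultimately have "1 / gam ^ 58 < 2^33" by (simp add: divide_less_eq mult.commute)
  then have "(1 / gam) ^ 58 < 2^33" by (simp add: power_one_over)
  moreover have "(2 powr (33 / real 58)) ^ 58 = (2::real) ^ 33" by (rule two_powr) simp_all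
  ultimately have "(1 / gam) ^ 58 < (2 powr (33 / real 58)) ^ 58" by simp
  then have "1 / gam < 2 powr (33 / real 58)" by (rule power_less_imp_less_base) simp
  then have "log 2 (1 / gam) < 33 / real 58" using g by (subst log_less_iff) auto
  then show ?thesis by simp
qed

definition theta :: "nat \<Rightarrow> real" where
  "theta n = (if n = 0 then 1 else real (ell n) * gam ^ n)"

lemma theta_pos: "theta n > 0"
  using ell_pos[of n] gam_pos by (auto simp: theta_def)

lemma theta_log: "1 \<le> n \<Longrightarrow> log 2 (real (ell n)) = real n * log 2 (1 / gam) + log 2 (theta n)"
proof -
  assume n: "1 \<le> n"
  have e: "real (ell n) > 0" using ell_pos[OF n] by simp
  have g: "gam > 0" using gam_pos by simp
  have "log 2 (theta n) = log 2 (real (ell n)) + log 2 (gam ^ n)"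
    using n e g by (simp add: theta_def log_mult)
  also have "log 2 (gam ^ n) = real n * log 2 gam" using g by (simp add: log_nat_power)
  also have "log 2 (1 / gam) = - log 2 gam" using g by (simp add: log_divide)
  ultimately show ?thesis by simp
qed

lemma theta_small: "\<kappa> > 1 \<Longrightarrow> theta \<in> o(\<lambda>n. \<kappa> ^ n)"
proof -
  assume k: "\<kappa> > 1"
  define q where "q = (1 + \<kappa>) / 2"
  have q: "1 < q" "q < \<kappa>" using k by (auto simp: q_def)
  define z where "z = gam / q"
  have g: "gam > 0" using gam_pos by simp
  have z: "0 < z" "z < gam" using q g by (auto simp: z_def field_simps)
  have gz: "gam = z * q" using q by (simp add: z_def)
  define C where "C = suminf (\<lambda>h. Lr h z)"
  have "eventually (\<lambda>n. norm (theta n) \<le> C * norm (q ^ n)) at_top"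
  proof (rule eventually_at_top_linorderI[of 1])
    fix n :: nat assume n: "n \<ge> 1"
    have "theta n = (real (ell n) * z ^ n) * q ^ n"
      using n by (simp add: theta_def gz power_mult_distrib)
    also have "\<dots> \<le> C * q ^ n"
      unfolding C_def using ell_bound[OF z, of n] q by (intro mult_right_mono) auto
    finally show "norm (theta n) \<le> C * norm (q ^ n)"
      using theta_pos[of n] q by simp
  qed
  then have 1: "theta \<in> O(\<lambda>n. q ^ n)" by (rule bigoI)
  have "(\<lambda>n. (q / \<kappa>) ^ n) \<longlonglongrightarrow> 0"
    by (rule LIMSEQ_power_zero) (use q k in simp)
  then have "(\<lambda>n. q ^ n / \<kappa> ^ n) \<longlonglongrightarrow> 0" by (simp add: power_divide)
  then have 2: "(\<lambda>n. q ^ n) \<in> o(\<lambda>n. \<kappa> ^ n)"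
    by (rule smalloI_tendsto) (use k in simp)
  show ?thesis by (rule landau_o.big_small_trans[OF 1 2])
qed

theorem theorem3:
  shows "(\<forall>h. \<exists>!z::real. z > 0 \<and> poly (map_poly real (LL h)) z = 1 / 2)
    \<and> (\<forall>n. finite {h. coeff (LL h) n \<noteq> 0})
    \<and> (\<exists>\<gamma>::real. gamma \<longlonglongrightarrow> \<gamma>
        \<and> 0.67418 \<le> \<gamma> \<and> \<gamma> < 0.67419
        \<and> 0.568 \<le> log 2 (1 / \<gamma>) \<and> log 2 (1 / \<gamma>) < 0.569
        \<and> (\<exists>\<theta>::nat \<Rightarrow> real. (\<forall>n. \<theta> n > 0)
             \<and> (\<forall>n\<ge>1. log 2 (real (ell n)) = real n * log 2 (1 / \<gamma>) + log 2 (\<theta> n))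
             \<and> (\<forall>\<kappa>::real. \<kappa> > 1 \<longrightarrow> \<theta> \<in> o(\<lambda>n. \<kappa> ^ n))))"
proof (intro conjI allI)
  fix h show "\<exists>!z::real. z > 0 \<and> poly (map_poly real (LL h)) z = 1 / 2"
    using root_ex1[of h] by (simp add: Lr_def)
next
  fix n show "finite {h. coeff (LL h) n \<noteq> 0}" by (rule supp_finite)
next
  have b: "0.67418 \<le> gam" "gam < 0.67419" using gam_bounds by auto
  show "\<exists>\<gamma>::real. gamma \<longlonglongrightarrow> \<gamma>
        \<and> 0.67418 \<le> \<gamma> \<and> \<gamma> < 0.67419
        \<and> 0.568 \<le> log 2 (1 / \<gamma>) \<and> log 2 (1 / \<gamma>) < 0.569
        \<and> (\<exists>\<theta>::nat \<Rightarrow> real. (\<forall>n. \<theta> n > 0)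
             \<and> (\<forall>n\<ge>1. log 2 (real (ell n)) = real n * log 2 (1 / \<gamma>) + log 2 (\<theta> n))
             \<and> (\<forall>\<kappa>::real. \<kappa> > 1 \<longrightarrow> \<theta> \<in> o(\<lambda>n. \<kappa> ^ n)))"
    using gamma_tendsto b log_lower log_upper theta_pos theta_log theta_small by blast
qed

end
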